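(* Let $(C,\mathbf A)$, $C\in\mathcal L(\mathcal X,\mathcal Y)$, $\mathbf A=(A_1,\dots,A_d)\in\mathcal L(\mathcal X)^d$, be a contractive $\mathbf a$-output-stable pair such that $\mathbf A$ is $C$-abelian. Then: (1) $M^*_{\lambda_j}\widehat{\mathcal O}^{\mathbf a}_{C,\mathbf A}=\widehat{\mathcal O}^{\mathbf a}_{C,\mathbf A}A_j$ for $j=1,\dots,d$, and hence $\operatorname{Ran}\widehat{\mathcal O}^{\mathbf a}_{C,\mathbf A}$ is invariant under each $M^*_{\lambda_j}$; (2) $\widehat{\mathcal O}^{\mathbf a}_{C,\mathbf A}$ maps $\mathcal X$ contractively into $\mathcal H_{\mathcal Y}(k_d)$, and it is isometric if and only if $(C,\mathbf A)$ is an isometric pair and $\mathbf A$ is strongly stable; (3) if $\mathcal M:=\operatorname{Ran}\widehat{\mathcal O}^{\mathbf a}_{C,\mathbf A}$ is given the lifted norm $\|\widehat{\mathcal O}^{\mathbf a}_{C,\mathbf A}x\|_{\mathcal M}=\|Q^{\mathbf a}x\|_{\mathcal X}$ (denote this space $\mathcal H(K^{\mathbf a}_{C,\mathbf A})$), then $\sum_{j=1}^d\|M^*_{\lambda_j}f\|^2_{\mathcal M}\le\|f\|^2_{\mathcal M}-\|f(0)\|^2_{\mathcal Y}$ for all $f\in\mathcal M$; moreover equality $\sum_j\|M^*_{\lambda_j}f\|^2_{\mathcal M}=\|f\|^2_{\mathcal M}-\|f(0)\|^2_{\mathcal Y}$ holds for every $f\in\mathcal M$ if and only if $(\operatorname{Ker}\mathcal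 G_{C,\mathbf A})^\perp$ is invariant under each $A_j$ and the restriction $(C^0,\mathbf A^0)$ of $(C,\mathbf A)$ to $(\operatorname{Ker}\mathcal G_{C,\mathbf A})^\perp$ is an isometric pair.
   Context: $\mathcal F_d$: free semigroup of words on $\{1,\dots,d\}$; $\mathbf A^v=A_{i_N}\cdots A_{i_1}$ for $v=i_N\cdots i_1$. Abelianization $\mathbf a\colon\mathcal F_d\to\mathbb Z^d_+$ counts occurrences of each letter; $|\mathbf n|=\sum n_k$, $\mathbf n!=\prod n_k!$, $\boldsymbol\lambda^{\mathbf n}=\prod\lambda_k^{n_k}$. Arveson space $\mathcal H_{\mathcal Y}(k_d)$: functions $\sum_{\mathbf n}f_{\mathbf n}\boldsymbol\lambda^{\mathbf n}$ on the unit ball $\mathbb B^d\subset\mathbb C^d$ with $\|f\|^2=\sum_{\mathbf n}\frac{\mathbf n!}{|\mathbf n|!}\|f_{\mathbf n}\|^2_{\mathcal Y}<\infty$; $M_{\lambda_j}$ is multiplication by $\lambda_j$ on it and $M^*_{\lambda_j}$ its adjoint. $\widehat{\mathcal O}^{\mathbf a}_{C,\mathbf A}x=\sum_{\mathbf n}\big(\sum_{v\in\mathbf a^{-1}(\mathbf n)}C\mathbf A^vx\big)\boldsymbol\lambda^{\mathbf n}$ (formally $C(I-\sum_j\lambda_jA_j)^{-1}x$); $(C,\mathbf A)$ is $\mathbf a$-output-stable if this is a bounded operator $\mathcal X\to\mathcal H_{\mathcal Y}(k_d)$; $\mathcal G^{\mathbf a}_{C,\mathbf A}=(\widehat{\mathcal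 O}^{\mathbf a}_{C,\mathbf A})^*\widehat{\mathcal O}^{\mathbf a}_{C,\mathbf A}$, and $Q^{\mathbf a}$ is the orthogonal projection onto $(\operatorname{Ker}\mathcal G^{\mathbf a}_{C,\mathbf A})^\perp$. $\mathcal G_{C,\mathbf A}=\sum_v(\mathbf A^v)^*C^*C\mathbf A^v$. $\mathbf A$ is $C$-abelian if $C\mathbf A^v=C\mathbf A^u$ whenever $\mathbf a(u)=\mathbf a(v)$. Contractive pair: $C^*C+\sum A_j^*A_j\le I$; isometric: equality. $\mathbf A$ strongly stable: $\sum_{|v|=N}\|\mathbf A^vx\|^2\to0$ for all $x$. With $\mathcal X=\operatorname{Ker}\mathcal G_{C,\mathbf A}\oplus(\operatorname{Ker}\mathcal G_{C,\mathbf A})^\perp$, $C^0=C|_{(\operatorname{Ker}\mathcal G_{C,\mathbf A})^\perp}$ and $A^0_j=P_{(\operatorname{Ker}\mathcal G_{C,\mathbf A})^\perp}A_j|_{(\operatorname{Ker}\mathcal G_{C,\mathbf A})^\perp}$. *)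

theory Defs
  imports "HOL-Analysis.Analysis"
begin

text \<open>Hilbert spaces are modelled as real inner product spaces that are complete
  (a complex Hilbert space with Re of its inner product is such a space).
  The letters are indexed by a finite type 'd (so d = CARD('d)); words of the free
  semigroup are lists of letters; a word v = i_N ... i_1 is the list [i_N, ..., i_1].\<close>

definition wordop :: "('d \<Rightarrow> 'x \<Rightarrow> 'x) \<Rightarrow> 'd list \<Rightarrow> 'x \<Rightarrow> 'x" where
  "wordop A v = foldr (\<lambda>i f. A i \<circ> f) v id"

definition abel :: "'d list \<Rightarrow> ('d \<Rightarrow> nat)" where
  "abel v = (\<lambda>k. count_list v k)"

definition mlen :: "('d::finite \<Rightarrow> nat) \<Rightarrow> nat" where
  "mlen n = (\<Sum>k\<in>UNIV. n k)"

definition arv_weight :: "('d::finite \<Rightarrow> nat) \<Rightarrow> real" where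
  "arv_weight n = (\<Prod>k\<in>UNIV. fact (n k)) / fact (mlen n)"

(* Arveson space H_Y(k_d), realised via Taylor coefficient families f = \<Sum>_n f_n \<lambda>^n *)
definition arveson :: "(('d::finite \<Rightarrow> nat) \<Rightarrow> 'y::real_inner) set" where
  "arveson = {f. (\<lambda>n. arv_weight n * (norm (f n))\<^sup>2) summable_on UNIV}"

definition arv_inner :: "(('d::finite \<Rightarrow> nat) \<Rightarrow> 'y::real_inner) \<Rightarrow> (('d \<Rightarrow> nat) \<Rightarrow> 'y) \<Rightarrow> real" where
  "arv_inner f g = (\<Sum>\<^sub>\<infinity>n. arv_weight n * (f n \<bullet> g n))"

definition arv_norm :: "(('d::finite \<Rightarrow> nat) \<Rightarrow> 'y::real_inner) \<Rightarrow> real" where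
  "arv_norm f = sqrt (\<Sum>\<^sub>\<infinity>n. arv_weight n * (norm (f n))\<^sup>2)"

definition arv_eval0 :: "(('d::finite \<Rightarrow> nat) \<Rightarrow> 'y) \<Rightarrow> 'y" where
  "arv_eval0 f = f (\<lambda>_. 0)"

definition mult_lambda :: "'d \<Rightarrow> (('d::finite \<Rightarrow> nat) \<Rightarrow> 'y::real_inner) \<Rightarrow> (('d \<Rightarrow> nat) \<Rightarrow> 'y)" where
  "mult_lambda j f = (\<lambda>n. if n j = 0 then 0 else f (n(j := n j - 1)))"

definition mult_lambda_adj :: "'d \<Rightarrow> (('d::finite \<Rightarrow> nat) \<Rightarrow> 'y::real_inner) \<Rightarrow> (('d \<Rightarrow> nat) \<Rightarrow> 'y)" where
  "mult_lambda_adj j f = (THE h. h \<in> arveson \<and>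
      (\<forall>g\<in>arveson. arv_inner (mult_lambda j g) f = arv_inner g h))"

definition obs_a :: "('x \<Rightarrow> 'y::real_vector) \<Rightarrow> ('d::finite \<Rightarrow> 'x \<Rightarrow> 'x) \<Rightarrow> 'x \<Rightarrow> (('d \<Rightarrow> nat) \<Rightarrow> 'y)" where
  "obs_a C A x = (\<lambda>n. \<Sum>v\<in>{v. abel v = n}. C (wordop A v x))"

definition a_output_stable :: "('x::real_normed_vector \<Rightarrow> 'y::real_inner) \<Rightarrow> ('d::finite \<Rightarrow> 'x \<Rightarrow> 'x) \<Rightarrow> bool" where
  "a_output_stable C A \<longleftrightarrow> (\<forall>x. obs_a C A x \<in> arveson) \<and>
      (\<exists>K. \<forall>x. arv_norm (obs_a C A x) \<le> K * norm x)"

definition gram_a :: "('x::real_inner \<Rightarrow> 'y::real_inner) \<Rightarrow> ('d::finite \<Rightarrow> 'x \<Rightarrow> 'x) \<Rightarrow> 'x \<Rightarrow> 'x" where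
  "gram_a C A x = (THE y. \<forall>x'. arv_inner (obs_a C A x) (obs_a C A x') = y \<bullet> x')"

definition gram :: "('x::real_inner \<Rightarrow> 'y::real_inner) \<Rightarrow> ('d \<Rightarrow> 'x \<Rightarrow> 'x) \<Rightarrow> 'x \<Rightarrow> 'x" where
  "gram C A x = (THE y. \<forall>x'. (\<Sum>\<^sub>\<infinity>v. C (wordop A v x) \<bullet> C (wordop A v x')) = y \<bullet> x')"

definition orth_proj :: "'x::real_inner set \<Rightarrow> 'x \<Rightarrow> 'x" where
  "orth_proj S x = (THE y. y \<in> S \<and> x - y \<in> orthogonal_comp S)"

definition Q_a :: "('x::real_inner \<Rightarrow> 'y::real_inner) \<Rightarrow> ('d::finite \<Rightarrow> 'x \<Rightarrow> 'x) \<Rightarrow> 'x \<Rightarrow> 'x" where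
  "Q_a C A = orth_proj (orthogonal_comp {x. gram_a C A x = 0})"

definition lifted_norm :: "('x::real_inner \<Rightarrow> 'y::real_inner) \<Rightarrow> ('d::finite \<Rightarrow> 'x \<Rightarrow> 'x) \<Rightarrow> (('d \<Rightarrow> nat) \<Rightarrow> 'y) \<Rightarrow> real" where
  "lifted_norm C A f = norm (Q_a C A (SOME x. obs_a C A x = f))"

definition C_abelian :: "('x \<Rightarrow> 'y) \<Rightarrow> ('d \<Rightarrow> 'x \<Rightarrow> 'x) \<Rightarrow> bool" where
  "C_abelian C A \<longleftrightarrow> (\<forall>u v x. abel u = abel v \<longrightarrow> C (wordop A v x) = C (wordop A u x))"

definition contractive_pair :: "('x::real_normed_vector \<Rightarrow> 'y::real_normed_vector) \<Rightarrow> ('d::finite \<Rightarrow> 'x \<Rightarrow> 'x) \<Rightarrow> bool" where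
  "contractive_pair C A \<longleftrightarrow> (\<forall>x. (norm (C x))\<^sup>2 + (\<Sum>j\<in>UNIV. (norm (A j x))\<^sup>2) \<le> (norm x)\<^sup>2)"

definition isometric_pair :: "('x::real_normed_vector \<Rightarrow> 'y::real_normed_vector) \<Rightarrow> ('d::finite \<Rightarrow> 'x \<Rightarrow> 'x) \<Rightarrow> bool" where
  "isometric_pair C A \<longleftrightarrow> (\<forall>x. (norm (C x))\<^sup>2 + (\<Sum>j\<in>UNIV. (norm (A j x))\<^sup>2) = (norm x)\<^sup>2)"

(* isometric pair for the compression (C|_S, P_S A_j|_S) to a closed subspace S *)
definition isometric_pair_on :: "'x::real_inner set \<Rightarrow> ('x \<Rightarrow> 'y::real_normed_vector) \<Rightarrow> ('d::finite \<Rightarrow> 'x \<Rightarrow> 'x) \<Rightarrow> bool" where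
  "isometric_pair_on S C A \<longleftrightarrow> (\<forall>x\<in>S. (norm (C x))\<^sup>2 + (\<Sum>j\<in>UNIV. (norm (orth_proj S (A j x)))\<^sup>2) = (norm x)\<^sup>2)"

definition strongly_stable :: "('d::finite \<Rightarrow> 'x::real_normed_vector \<Rightarrow> 'x) \<Rightarrow> bool" where
  "strongly_stable A \<longleftrightarrow> (\<forall>x. (\<lambda>N. \<Sum>v\<in>{v::'d list. length v = N}. (norm (wordop A v x))\<^sup>2) \<longlonglongrightarrow> 0)"

end

theory Submission
  imports Defs "HOL-Combinatorics.Multiset_Permutations"
begin

lemma wordop_Nil[simp]: "wordop A [] x = x" by (simp add: wordop_def)
lemma wordop_Cons[simp]: "wordop A (i # v) x = A i (wordop A v x)" by (simp add: wordop_def)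
lemma wordop_snoc: "wordop A (v @ [j]) x = wordop A v (A j x)" by (induction v) auto

lemma wordop_bl:
  assumes "\<And>j. bounded_linear (A j)" shows "bounded_linear (wordop A v)"
proof (induction v)
  case Nil
  have "wordop A [] = (\<lambda>x. x)" by (rule ext) simp
  then show ?case by (simp add: bounded_linear_ident)
next
  case (Cons i v)
  have "wordop A (i#v) = (\<lambda>x. A i (wordop A v x))" by (rule ext) simp
  then show ?case using bounded_linear_compose[OF assms Cons.IH] by simp
qed

lemma abel_Nil[simp]: "abel [] = (\<lambda>_. 0)" by (simp add: abel_def)
lemma abel_snoc: "abel (v @ [j]) = (abel v)(j := abel v j + 1)"
  by (auto simp: abel_def fun_eq_iff)
lemma abel_Cons: "abel (j # v) = (abel v)(j := abel v j + 1)"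
  by (auto simp: abel_def fun_eq_iff)
lemma abel_mset: "abel v = count (mset v)" by (simp add: abel_def fun_eq_iff count_mset)

definition msn :: "('d::finite \<Rightarrow> nat) \<Rightarrow> 'd multiset" where
  "msn n = (\<Sum>k\<in>UNIV. replicate_mset (n k) k)"

lemma count_msn[simp]: "count (msn n) k = n k"
  by (simp add: msn_def count_sum)

lemma fiber_perm: "{v. abel v = n} = permutations_of_multiset (msn n)"
  by (auto simp: permutations_of_multiset_def abel_mset multiset_eq_iff fun_eq_iff)

lemma count_msn_fun: "count (msn n) = n" by (rule ext) simp

lemma notin_msn: "i \<notin># msn n \<Longrightarrow> n i = 0"
  by (metis count_msn not_in_iff)

lemma finite_fiber: "finite {v. abel v = (n::'d::finite \<Rightarrow> nat)}"
  by (simp add: fiber_perm)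

lemma fiber_nonempty: "\<exists>v. abel v = (n::'d::finite \<Rightarrow> nat)"
  using ex_mset[of "msn n"] by (metis abel_mset count_msn_fun)

lemma size_msn: "size (msn n) = mlen n"
proof -
  have "size (msn n) = sum (count (msn n)) (set_mset (msn n))"
    by (simp add: size_multiset_overloaded_eq)
  also have "\<dots> = sum n UNIV"
    unfolding count_msn_fun by (rule sum.mono_neutral_left) (auto simp: notin_msn)
  finally show ?thesis by (simp add: mlen_def)
qed

lemma card_fiber_weight: "arv_weight n * real (card {v. abel v = n}) = 1"
proof -
  have "card (permutations_of_multiset (msn n)) * (\<Prod>x\<in>set_mset (msn n). fact (count (msn n) x)) = fact (size (msn n))"
    by (rule card_permutations_of_multiset_aux)
  moreover have "(\<Prod>x\<in>set_mset (msn n). fact (count (msn n) x)) = (\<Prod>k\<in>UNIV. fact (n k) :: nat)"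
    unfolding count_msn_fun by (rule prod.mono_neutral_left) (auto simp: notin_msn)
  ultimately have "card {v. abel v = n} * (\<Prod>k\<in>UNIV. fact (n k) :: nat) = fact (mlen n)"
    by (simp add: fiber_perm size_msn)
  then have "real (card {v. abel v = n}) * (\<Prod>k\<in>UNIV. fact (n k)) = fact (mlen n)"
    by (metis (mono_tags, lifting) of_nat_fact of_nat_mult of_nat_prod prod.cong)
  then show ?thesis by (simp add: arv_weight_def field_simps)
qed

lemma infsum_fibers:
  fixes f :: "'a \<Rightarrow> 'c::banach" and g :: "'a \<Rightarrow> 'b"
  assumes "f summable_on UNIV" "\<And>b. finite {a. g a = b}"
  shows "infsum (\<lambda>b. \<Sum>a\<in>{a. g a = b}. f a) UNIV = infsum f UNIV \<and> (\<lambda>b. \<Sum>a\<in>{a. g a = b}. f a) summable_on UNIV"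
proof -
  let ?S = "Sigma UNIV (\<lambda>b. {a. g a = b})"
  have img: "?S = (\<lambda>a. (g a, a)) ` UNIV" by auto
  have inj: "inj (\<lambda>a. (g a, a))" by (auto simp: inj_on_def)
  have "(\<lambda>(b,a). f a) summable_on ?S" unfolding img summable_on_reindex[OF inj] by (simp add: o_def assms)
  then have 1: "infsum (\<lambda>b. infsum (\<lambda>a. f a) {a. g a = b}) UNIV = infsum (\<lambda>(b,a). f a) ?S"
    and 2: "(\<lambda>b. infsum (\<lambda>a. f a) {a. g a = b}) summable_on UNIV"
    using infsum_Sigma'_banach[of "\<lambda>b a. f a"] summable_on_Sigma_banach[of "\<lambda>b a. f a"] by auto
  have 3: "infsum (\<lambda>(b,a). f a) ?S = infsum f UNIV" unfolding img infsum_reindex[OF inj] by (simp add: o_def)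
  show ?thesis using 1 2 3 assms(2) by simp
qed

lemma abel_zero_iff: "abel v = (\<lambda>_. 0) \<longleftrightarrow> v = []"
proof
  assume h: "abel v = (\<lambda>_. 0)"
  show "v = []"
  proof (cases v)
    case (Cons a w)
    then have "abel v a > 0" by (simp add: abel_def)
    then show ?thesis using h by simp
  qed simp
qed simp

definition rep :: "('d::finite \<Rightarrow> nat) \<Rightarrow> 'd list" where
  "rep n = (SOME v. abel v = n)"

lemma abel_rep[simp]: "abel (rep n) = n"
  unfolding rep_def by (rule someI_ex[OF fiber_nonempty])

definition Lw :: "nat \<Rightarrow> 'd list set" where "Lw N = {v. length v = N}"
definition Ltw :: "nat \<Rightarrow> 'd list set" where "Ltw N = {v. length v < N}"

lemma finite_Lw[simp]: "finite (Lw N :: 'd::finite list set)"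
  using finite_lists_length_eq[of "UNIV::'d set" N] by (simp add: Lw_def)

lemma Ltw_Suc: "Ltw (Suc N) = Ltw N \<union> Lw N" by (auto simp: Ltw_def Lw_def)
lemma Ltw_0[simp]: "Ltw 0 = {}" by (simp add: Ltw_def)
lemma Lw_0[simp]: "Lw 0 = {[]}" by (auto simp: Lw_def)

lemma finite_Ltw[simp]: "finite (Ltw N :: 'd::finite list set)"
  by (induction N) (auto simp: Ltw_Suc)

lemma sum_Lw_Suc:
  "(\<Sum>v\<in>Lw (Suc N). f v) = (\<Sum>u\<in>(Lw N :: 'd::finite list set). \<Sum>j\<in>UNIV. f (j # u))"
proof -
  have img: "Lw (Suc N) = (\<lambda>(j,u). j#u) ` (UNIV \<times> (Lw N :: 'd list set))"
    by (auto simp: Lw_def length_Suc_conv image_iff)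
  have inj: "inj_on (\<lambda>(j,u). j#u) (UNIV \<times> (Lw N :: 'd list set))" by (auto simp: inj_on_def)
  have "(\<Sum>v\<in>Lw (Suc N). f v) = (\<Sum>p\<in>UNIV \<times> Lw N. f ((\<lambda>(j,u). j#u) p))"
    unfolding img by (subst sum.reindex[OF inj]) (simp add: o_def)
  also have "\<dots> = (\<Sum>j\<in>UNIV. \<Sum>u\<in>Lw N. f (j#u))"
    unfolding sum.cartesian_product by (rule sum.cong) auto
  also have "\<dots> = (\<Sum>u\<in>Lw N. \<Sum>j\<in>UNIV. f (j#u))" by (rule sum.swap)
  finally show ?thesis .
qed

lemma Ltw_filterlim: "filterlim (Ltw :: nat \<Rightarrow> 'd::finite list set) (finite_subsets_at_top UNIV) sequentially"
  unfolding filterlim_finite_subsets_at_top eventually_sequentially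
proof (intro allI impI)
  fix X :: "'d list set" assume "finite X \<and> X \<subseteq> UNIV"
  then have X: "\<And>v. v \<in> X \<Longrightarrow> length v \<le> (\<Sum>v\<in>X. length v)" by (auto simp: member_le_sum)
  show "\<exists>M. \<forall>N\<ge>M. finite (Ltw N :: 'd list set) \<and> X \<subseteq> Ltw N \<and> (Ltw N :: 'd list set) \<subseteq> UNIV"
    by (rule exI[of _ "Suc (\<Sum>v\<in>X. length v)"]) (use finite_Ltw[of _, unfolded Ltw_def] in \<open>auto simp: Ltw_def dest!: X\<close>)
qed

lemma infsum_point:
  fixes F :: "'a \<Rightarrow> 'b::{comm_monoid_add, t2_space}"
  assumes "\<And>m. m \<noteq> n \<Longrightarrow> F m = 0"
  shows "infsum F UNIV = F n"
proof -
  have "infsum F UNIV = infsum F {n}" by (rule infsum_cong_neutral) (use assms in auto)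
  then show ?thesis by simp
qed

lemma summable_point:
  fixes F :: "'a \<Rightarrow> 'b::{comm_monoid_add, topological_space}"
  assumes "\<And>m. m \<noteq> n \<Longrightarrow> F m = 0"
  shows "F summable_on UNIV"
proof -
  have "F summable_on UNIV \<longleftrightarrow> F summable_on {n}" by (rule summable_on_cong_neutral) (use assms in auto)
  then show ?thesis by simp
qed

lemma arv_weight_pos': "arv_weight n > 0"
  by (simp add: arv_weight_def prod_pos)

lemma arv_determined:
  fixes h h' :: "('d::finite \<Rightarrow> nat) \<Rightarrow> 'y::real_inner"
  assumes "\<forall>g\<in>arveson. arv_inner g h = arv_inner g h'"
  shows "h = h'"
proof
  fix n
  define y where "y = h n - h' n"
  define g where "g = (\<lambda>m. if m = n then y else 0)"
  have "(\<lambda>m. arv_weight m * (norm (g m))\<^sup>2) summable_on UNIV"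
    by (rule summable_point[where n=n]) (simp add: g_def)
  then have "g \<in> arveson" unfolding arveson_def by simp
  then have "arv_inner g h = arv_inner g h'" using assms by blast
  moreover have "arv_inner g h = arv_weight n * (y \<bullet> h n)" for h :: "('d \<Rightarrow> nat) \<Rightarrow> 'y"
    unfolding arv_inner_def by (subst infsum_point[where n=n]) (auto simp: g_def)
  ultimately have "arv_weight n * (y \<bullet> h n) = arv_weight n * (y \<bullet> h' n)" by metis
  then have "y \<bullet> h n = y \<bullet> h' n" using arv_weight_pos'[of n] by simp
  then have "y \<bullet> y = 0" by (simp add: y_def inner_diff_right)
  then show "h n = h' n" by (simp add: y_def)
qed

lemma norm_mult_le_sq: "norm (a::'a::real_inner) * norm b \<le> ((norm a)\<^sup>2 + (norm b)\<^sup>2) / 2"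
  using sum_squares_bound[of "norm a" "norm b"] by simp


lemma parallelogram:
  fixes a b :: "'a::real_inner"
  shows "(norm (a + b))\<^sup>2 + (norm (a - b))\<^sup>2 = 2 * (norm a)\<^sup>2 + 2 * (norm b)\<^sup>2"
  by (simp add: power2_norm_eq_inner inner_add_left inner_add_right inner_diff_left inner_diff_right inner_commute)

lemma proj_exists:
  fixes S :: "'a::{real_inner,complete_space} set"
  assumes sub: "subspace S" and cl: "closed S"
  shows "\<exists>p\<in>S. x - p \<in> orthogonal_comp S"
proof -
  define D where "D = (\<lambda>s. norm (x - s)) ` S"
  define d where "d = Inf D"
  have ne: "D \<noteq> {}" using subspace_0[OF sub] by (auto simp: D_def)
  have bdd: "bdd_below D" by (auto simp: D_def intro!: bdd_belowI[of _ 0])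
  have d_le: "d \<le> norm (x - s)" if "s \<in> S" for s
    unfolding d_def using cInf_lower[OF _ bdd] that by (auto simp: D_def)
  have d0: "d \<ge> 0" unfolding d_def using ne by (intro cInf_greatest) (auto simp: D_def)
  have "\<exists>s\<in>S. (norm (x - s))\<^sup>2 < d\<^sup>2 + inverse (real (Suc n))" for n
  proof -
    have "d < sqrt (d\<^sup>2 + inverse (real (Suc n)))"
      using d0 by (intro real_less_rsqrt) simp
    then obtain t where t: "t \<in> D" "t < sqrt (d\<^sup>2 + inverse (real (Suc n)))"
      using cInf_less_iff[OF ne bdd] unfolding d_def by blast
    then obtain s where s: "s \<in> S" "t = norm (x - s)" by (auto simp: D_def)
    have "(norm (x - s))\<^sup>2 < (sqrt (d\<^sup>2 + inverse (real (Suc n))))\<^sup>2"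
      using t s by (intro power_strict_mono) auto
    also have "\<dots> = d\<^sup>2 + inverse (real (Suc n))" by (simp add: add_nonneg_nonneg)
    finally show ?thesis using s by blast
  qed
  then obtain s where s: "\<And>n. s n \<in> S" "\<And>n. (norm (x - s n))\<^sup>2 < d\<^sup>2 + inverse (real (Suc n))"
    by metis
  have dd: "(norm (s m - s n))\<^sup>2 \<le> 2 * inverse (real (Suc m)) + 2 * inverse (real (Suc n))" for m n
  proof -
    have mid: "(1/2) *\<^sub>R (s m + s n) \<in> S"
      using s(1) sub by (simp add: subspace_add subspace_scale)
    have "(x - s m) + (x - s n) = 2 *\<^sub>R (x - (1/2) *\<^sub>R (s m + s n))"
      by (simp add: algebra_simps scaleR_2)
    then have "(norm ((x - s m) + (x - s n)))\<^sup>2 = 4 * (norm (x - (1/2) *\<^sub>R (s m + s n)))\<^sup>2"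
      by (simp add: power_mult_distrib)
    moreover have "d\<^sup>2 \<le> (norm (x - (1/2) *\<^sub>R (s m + s n)))\<^sup>2"
      using d_le[OF mid] d0 by (simp add: power_mono)
    moreover have "(x - s m) - (x - s n) = - (s m - s n)" by simp
    then have "(norm ((x - s m) - (x - s n)))\<^sup>2 = (norm (s m - s n))\<^sup>2" by (metis norm_minus_cancel)
    moreover note parallelogram[of "x - s m" "x - s n"] s(2)[of m] s(2)[of n]
    ultimately show ?thesis by linarith
  qed
  have "Cauchy s"
    unfolding Cauchy_def
  proof (intro allI impI)
    fix e :: real assume e: "e > 0"
    obtain M where M: "inverse (real (Suc M)) < e\<^sup>2 / 4"
      using reals_Archimedean[of "e\<^sup>2/4"] e by auto
    show "\<exists>M. \<forall>m\<ge>M. \<forall>n\<ge>M. dist (s m) (s n) < e"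
    proof (intro exI allI impI)
      fix m n assume mn: "M \<le> m" "M \<le> n"
      have i1: "inverse (real (Suc m)) \<le> inverse (real (Suc M))" and i2: "inverse (real (Suc n)) \<le> inverse (real (Suc M))"
        using mn by (auto intro!: le_imp_inverse_le)
      have "(dist (s m) (s n))\<^sup>2 = (norm (s m - s n))\<^sup>2" by (simp add: dist_norm)
      also have "\<dots> < e\<^sup>2" using dd[of m n] M i1 i2 by linarith
      finally have "(dist (s m) (s n))\<^sup>2 < e\<^sup>2" .
      then show "dist (s m) (s n) < e" using e by (simp add: power_less_imp_less_base)
    qed
  qed
  then obtain p where p: "s \<longlonglongrightarrow> p" using Cauchy_convergent_iff convergent_def by blast
  have pS: "p \<in> S" using closed_sequentially[OF cl s(1) p] .
  have "(\<lambda>n. (norm (x - s n))\<^sup>2) \<longlonglongrightarrow> (norm (x - p))\<^sup>2"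
    by (intro tendsto_intros p)
  moreover have "(\<lambda>n. d\<^sup>2 + inverse (real (Suc n))) \<longlonglongrightarrow> d\<^sup>2 + 0"
    by (intro tendsto_intros LIMSEQ_inverse_real_of_nat)
  ultimately have pd: "(norm (x - p))\<^sup>2 \<le> d\<^sup>2"
    using s(2) by (intro LIMSEQ_le) (auto intro: less_imp_le)
  have "x - p \<in> orthogonal_comp S"
    unfolding orthogonal_comp_def orthogonal_def
  proof (intro CollectI ballI)
    fix y assume y: "y \<in> S"
    define z where "z = x - p"
    define a where "a = z \<bullet> y"
    define b where "b = y \<bullet> y"
    have key: "2 * t * a \<le> t\<^sup>2 * b" for t
    proof -
      have "p + t *\<^sub>R y \<in> S" using pS y sub by (simp add: subspace_add subspace_scale)
      then have "d \<le> norm (x - (p + t *\<^sub>R y))" by (rule d_le)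
      then have "d\<^sup>2 \<le> (norm (z - t *\<^sub>R y))\<^sup>2" using d0 by (simp add: z_def power_mono algebra_simps)
      also have "(norm (z - t *\<^sub>R y))\<^sup>2 = (z - t *\<^sub>R y) \<bullet> (z - t *\<^sub>R y)" by (rule power2_norm_eq_inner)
      also have "\<dots> = z \<bullet> z - 2 * t * a + t\<^sup>2 * b"
        by (simp add: inner_diff_left inner_diff_right inner_commute a_def b_def power2_eq_square algebra_simps)
      finally have "d\<^sup>2 \<le> z \<bullet> z - 2 * t * a + t\<^sup>2 * b" .
      moreover have "z \<bullet> z = (norm (x - p))\<^sup>2" by (simp add: z_def power2_norm_eq_inner)
      ultimately show ?thesis using pd by linarith
    qed
    have "a = 0"
    proof (cases "b = 0")
      case True
      then have "y = 0" by (simp add: b_def)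
      then show ?thesis by (simp add: a_def)
    next
      case False
      then have bpos: "b > 0" by (simp add: b_def)
      have "2 * (a / b) * a \<le> (a / b)\<^sup>2 * b" by (rule key)
      then have "2 * a\<^sup>2 / b \<le> a\<^sup>2 / b" using bpos by (simp add: power2_eq_square field_simps)
      then have "a\<^sup>2 / b \<le> 0" by linarith
      then have "a\<^sup>2 \<le> 0" using bpos by (simp add: divide_le_0_iff)
      then show ?thesis by simp
    qed
    then show "y \<bullet> (x - p) = 0" by (simp add: a_def z_def inner_commute)
  qed
  then show ?thesis using pS by blast
qed

lemma zero_if_both: "a \<in> W \<Longrightarrow> a \<in> orthogonal_comp W \<Longrightarrow> (a::'a::real_inner) = 0"
  by (auto simp: orthogonal_comp_def orthogonal_def)

lemma riesz:
  fixes \<phi> :: "'a::{real_inner,complete_space} \<Rightarrow> real"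
  assumes bl: "bounded_linear \<phi>"
  shows "\<exists>y. \<forall>x. \<phi> x = y \<bullet> x"
proof (cases "\<forall>x. \<phi> x = 0")
  case True
  then show ?thesis by (intro exI[of _ 0]) simp
next
  case False
  then obtain u where u: "\<phi> u \<noteq> 0" by blast
  have lin: "linear \<phi>" using bl by (rule bounded_linear.linear)
  define K where "K = {x. \<phi> x = 0}"
  have subK: "subspace K" unfolding K_def subspace_def
    using linear_0[OF lin] linear_add[OF lin] linear_scale[OF lin] by auto
  have clK: "closed K" unfolding K_def
    by (intro closed_Collect_eq linear_continuous_on bl continuous_on_const)
  obtain p where p: "p \<in> K" "u - p \<in> orthogonal_comp K" using proj_exists[OF subK clK] by blast
  define z where "z = u - p"
  have phz: "\<phi> z = \<phi> u" using p(1) linear_diff[OF lin] by (simp add: z_def K_def)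
  then have "z \<noteq> 0" using u linear_0[OF lin] by auto
  then have zz: "z \<bullet> z \<noteq> 0" by simp
  have orth: "k \<in> K \<Longrightarrow> k \<bullet> z = 0" for k
    using p(2) by (auto simp: z_def orthogonal_comp_def orthogonal_def)
  show ?thesis
  proof (intro exI allI)
    fix w
    define w' where "w' = w - (\<phi> w / \<phi> z) *\<^sub>R z"
    have "\<phi> w' = \<phi> w - (\<phi> w / \<phi> z) * \<phi> z"
      by (simp add: w'_def linear_diff[OF lin] linear_scale[OF lin])
    then have "w' \<in> K" using u phz by (simp add: K_def)
    then have "w' \<bullet> z = 0" by (rule orth)
    then have "w \<bullet> z = (\<phi> w / \<phi> z) * (z \<bullet> z)" by (simp add: w'_def inner_diff_left)
    then show "\<phi> w = ((\<phi> z / (z \<bullet> z)) *\<^sub>R z) \<bullet> w"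
      using zz u phz by (simp add: inner_commute field_simps)
  qed
qed


locale thm_setting =
  fixes C :: "'x::{real_inner,complete_space} \<Rightarrow> 'y::{real_inner,complete_space}"
    and A :: "'d::finite \<Rightarrow> 'x \<Rightarrow> 'x"
  assumes blC: "bounded_linear C"
    and blA: "\<And>j. bounded_linear (A j)"
    and contr: "contractive_pair C A"
    and stab: "a_output_stable C A"
    and cab: "C_abelian C A"
begin

definition cw :: "'d list \<Rightarrow> 'x \<Rightarrow> 'y" where "cw v x = C (wordop A v x)"
definition chat :: "'x \<Rightarrow> ('d \<Rightarrow> nat) \<Rightarrow> 'y" where "chat x n = C (wordop A (rep n) x)"
definition Dft :: "'x \<Rightarrow> real" where
  "Dft y = (norm y)\<^sup>2 - (norm (C y))\<^sup>2 - (\<Sum>j\<in>UNIV. (norm (A j y))\<^sup>2)"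

lemma Dft_nonneg: "Dft y \<ge> 0"
proof -
  have "(norm (C y))\<^sup>2 + (\<Sum>j\<in>UNIV. (norm (A j y))\<^sup>2) \<le> (norm y)\<^sup>2"
    using contr by (simp add: contractive_pair_def)
  then show ?thesis unfolding Dft_def by linarith
qed

lemma cw_abel: "abel v = n \<Longrightarrow> cw v x = chat x n"
  using cab unfolding C_abelian_def cw_def chat_def by (metis abel_rep)

lemma obs_chat: "obs_a C A x n = real (card {v. abel v = n}) *\<^sub>R chat x n"
proof -
  have "obs_a C A x n = (\<Sum>v\<in>{v. abel v = n}. chat x n)"
    unfolding obs_a_def by (rule sum.cong) (auto simp: cw_abel[symmetric] cw_def)
  then show ?thesis by (simp only: sum_constant_scaleR)
qed

lemma weight_obs: "arv_weight n *\<^sub>R obs_a C A x n = chat x n"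
  using card_fiber_weight[of n] by (simp add: obs_chat)

lemma arv_weight_pos: "arv_weight n > 0"
  by (simp add: arv_weight_def prod_pos)

lemma eval0: "arv_eval0 (obs_a C A x) = C x"
proof -
  have "{v. abel v = (\<lambda>_. 0::nat)} = {([]::'d list)}" using abel_zero_iff by auto
  then show ?thesis by (simp add: arv_eval0_def obs_a_def)
qed

lemma telescope:
  "(\<Sum>v\<in>Ltw N. (norm (cw v x))\<^sup>2) + (\<Sum>v\<in>Lw N. (norm (wordop A v x))\<^sup>2)
     + (\<Sum>v\<in>Ltw N. Dft (wordop A v x)) = (norm x)\<^sup>2"
proof (induction N)
  case 0
  then show ?case by simp
next
  case (Suc N)
  have disj: "Ltw N \<inter> Lw N = {}" by (auto simp: Ltw_def Lw_def)
  have "(\<Sum>v\<in>Lw (Suc N). (norm (wordop A v x))\<^sup>2)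
      = (\<Sum>u\<in>Lw N. \<Sum>j\<in>UNIV. (norm (A j (wordop A u x)))\<^sup>2)"
    by (simp add: sum_Lw_Suc)
  also have "\<dots> = (\<Sum>u\<in>Lw N. (norm (wordop A u x))\<^sup>2 - (norm (cw u x))\<^sup>2 - Dft (wordop A u x))"
    by (rule sum.cong) (auto simp: Dft_def cw_def)
  finally have e: "(\<Sum>v\<in>Lw (Suc N). (norm (wordop A v x))\<^sup>2) = 
     (\<Sum>u\<in>Lw N. (norm (wordop A u x))\<^sup>2) - (\<Sum>u\<in>Lw N. (norm (cw u x))\<^sup>2) - (\<Sum>u\<in>Lw N. Dft (wordop A u x))"
    by (simp add: sum_subtractf)
  show ?case using Suc.IH
    by (simp add: Ltw_Suc sum.union_disjoint[OF _ _ disj] e)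
qed

definition Sg :: "'x \<Rightarrow> real" where "Sg x = infsum (\<lambda>v. (norm (cw v x))\<^sup>2) UNIV"
definition Tr :: "nat \<Rightarrow> 'x \<Rightarrow> real" where "Tr N x = (\<Sum>v\<in>Ltw N. (norm (cw v x))\<^sup>2)"

lemma Tr_le: "Tr N x \<le> (norm x)\<^sup>2"
proof -
  have "0 \<le> (\<Sum>v\<in>Lw N. (norm (wordop A v x))\<^sup>2)" by (simp add: sum_nonneg)
  moreover have "0 \<le> (\<Sum>v\<in>Ltw N. Dft (wordop A v x))" by (simp add: sum_nonneg Dft_nonneg)
  ultimately show ?thesis using telescope[where N=N and x=x] unfolding Tr_def by linarith
qed

lemma Ltw_cover: "finite F \<Longrightarrow> F \<subseteq> Ltw (Suc (\<Sum>v\<in>F. length v))"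
  by (auto simp: Ltw_def le_imp_less_Suc member_le_sum)

lemma Ltw_mono: "M \<le> N \<Longrightarrow> Ltw M \<subseteq> Ltw N" by (auto simp: Ltw_def)

lemma summ: "(\<lambda>v. (norm (cw v x))\<^sup>2) summable_on UNIV"
proof (rule nonneg_bdd_above_summable_on)
  show "bdd_above (sum (\<lambda>v. (norm (cw v x))\<^sup>2) ` {F. F \<subseteq> UNIV \<and> finite F})"
  proof (rule bdd_aboveI)
    fix s assume "s \<in> sum (\<lambda>v. (norm (cw v x))\<^sup>2) ` {F. F \<subseteq> UNIV \<and> finite F}"
    then obtain F where F: "finite F" "s = sum (\<lambda>v. (norm (cw v x))\<^sup>2) F" by auto
    have "s \<le> Tr (Suc (\<Sum>v\<in>F. length v)) x"
      unfolding F Tr_def by (rule sum_mono2) (auto simp: Ltw_cover[OF F(1)])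
    also have "\<dots> \<le> (norm x)\<^sup>2" by (rule Tr_le)
    finally show "s \<le> (norm x)\<^sup>2" .
  qed
qed simp

lemma Tr_lim: "(\<lambda>N. Tr N x) \<longlonglongrightarrow> Sg x"
proof -
  have "((\<lambda>v. (norm (cw v x))\<^sup>2) has_sum (Sg x)) UNIV"
    unfolding Sg_def by (rule has_sum_infsum[OF summ])
  then have 1: "(sum (\<lambda>v. (norm (cw v x))\<^sup>2) \<longlongrightarrow> Sg x) (finite_subsets_at_top UNIV)"
    unfolding has_sum_def .
  have 2: "filterlim (Ltw :: nat \<Rightarrow> 'd list set) (finite_subsets_at_top UNIV) sequentially"
    by (rule Ltw_filterlim)
  show ?thesis using filterlim_compose[OF 1 2] unfolding Tr_def .
qed

lemma Sg_le: "Sg x \<le> (norm x)\<^sup>2"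
  using Tr_lim Tr_le by (meson LIMSEQ_le_const2)

lemma Sg_nonneg: "Sg x \<ge> 0"
  unfolding Sg_def by (rule infsum_nonneg) simp

lemma iso_iff: "(\<forall>x. Sg x = (norm x)\<^sup>2) \<longleftrightarrow> isometric_pair C A \<and> strongly_stable A"
proof
  assume H: "\<forall>x. Sg x = (norm x)\<^sup>2"
  have lim: "(\<lambda>N. (norm x)\<^sup>2 - Tr N x) \<longlonglongrightarrow> 0" for x
    using tendsto_diff[OF tendsto_const Tr_lim, of "(norm x)\<^sup>2" x] H by simp
  have tel: "Tr N x + (\<Sum>v\<in>Lw N. (norm (wordop A v x))\<^sup>2) + (\<Sum>v\<in>Ltw N. Dft (wordop A v x)) = (norm x)\<^sup>2" for N x
    using telescope[where N=N and x=x] by (simp add: Tr_def)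
  have "strongly_stable A" unfolding strongly_stable_def
  proof
    fix x
    show "(\<lambda>N. \<Sum>v\<in>{v::'d list. length v = N}. (norm (wordop A v x))\<^sup>2) \<longlonglongrightarrow> 0"
    proof (rule tendsto_sandwich[OF _ _ tendsto_const lim[of x]])
      show "\<forall>\<^sub>F N in sequentially. 0 \<le> (\<Sum>v\<in>{v::'d list. length v = N}. (norm (wordop A v x))\<^sup>2)"
        by (simp add: sum_nonneg)
      show "\<forall>\<^sub>F N in sequentially. (\<Sum>v\<in>{v::'d list. length v = N}. (norm (wordop A v x))\<^sup>2) \<le> (norm x)\<^sup>2 - Tr N x"
      proof (rule always_eventually, rule allI)
        fix N
        have "0 \<le> (\<Sum>v\<in>Ltw N. Dft (wordop A v x))" by (simp add: sum_nonneg Dft_nonneg)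
        then show "(\<Sum>v\<in>{v::'d list. length v = N}. (norm (wordop A v x))\<^sup>2) \<le> (norm x)\<^sup>2 - Tr N x"
          using tel[of N x] by (simp add: Lw_def)
      qed
    qed
  qed
  moreover have "Dft x = 0" for x
  proof -
    have "Dft x \<le> (norm x)\<^sup>2 - Tr N x" if "N \<ge> 1" for N
    proof -
      have "[] \<in> Ltw N" using that by (simp add: Ltw_def)
      then have "Dft (wordop A [] x) \<le> (\<Sum>v\<in>Ltw N. Dft (wordop A v x))"
        by (intro member_le_sum) (auto simp: Dft_nonneg)
      moreover have "0 \<le> (\<Sum>v\<in>Lw N. (norm (wordop A v x))\<^sup>2)" by (simp add: sum_nonneg)
      ultimately show ?thesis using tel[of N x] by simp
    qed
    then have "Dft x \<le> 0" by (intro LIMSEQ_le_const[OF lim[of x]]) auto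
    then show ?thesis using Dft_nonneg[of x] by simp
  qed
  then have "isometric_pair C A" unfolding isometric_pair_def Dft_def
    by (metis (no_types, lifting) add_diff_cancel_left' diff_add_cancel diff_diff_eq2 diff_zero)
  ultimately show "isometric_pair C A \<and> strongly_stable A" by simp
next
  assume "isometric_pair C A \<and> strongly_stable A"
  then have iso: "\<And>y. Dft y = 0" and ss: "strongly_stable A"
    unfolding isometric_pair_def Dft_def by (metis diff_diff_eq diff_self)+
  show "\<forall>x. Sg x = (norm x)\<^sup>2"
  proof
    fix x
    have "Tr N x = (norm x)\<^sup>2 - (\<Sum>v\<in>Lw N. (norm (wordop A v x))\<^sup>2)" for N
      using telescope[where N=N and x=x] by (simp add: Tr_def iso)
    moreover have "(\<lambda>N. (norm x)\<^sup>2 - (\<Sum>v\<in>Lw N. (norm (wordop A v x))\<^sup>2)) \<longlonglongrightarrow> (norm x)\<^sup>2 - 0"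
      using ss unfolding strongly_stable_def Lw_def by (intro tendsto_diff tendsto_const) auto
    ultimately have "(\<lambda>N. Tr N x) \<longlonglongrightarrow> (norm x)\<^sup>2" by simp
    then show "Sg x = (norm x)\<^sup>2" using Tr_lim LIMSEQ_unique by blast
  qed
qed

definition Bf :: "'x \<Rightarrow> 'x \<Rightarrow> real" where
  "Bf x x' = infsum (\<lambda>v. cw v x \<bullet> cw v x') UNIV"

lemma abs_summ_inner: "(\<lambda>v. norm (cw v x \<bullet> cw v x')) summable_on UNIV"
proof -
  have "(\<lambda>v. (1/2) * ((norm (cw v x))\<^sup>2 + (norm (cw v x'))\<^sup>2)) summable_on UNIV"
    by (intro summable_on_cmult_right summable_on_add summ)
  then show "(\<lambda>v. norm (cw v x \<bullet> cw v x')) summable_on UNIV"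
  proof (rule summable_on_comparison_test)
    fix v
    show "norm (cw v x \<bullet> cw v x') \<le> (1/2) * ((norm (cw v x))\<^sup>2 + (norm (cw v x'))\<^sup>2)"
      using Cauchy_Schwarz_ineq2[of "cw v x" "cw v x'"] norm_mult_le_sq[of "cw v x" "cw v x'"] by simp
  qed simp
qed

lemma summ_inner: "(\<lambda>v. cw v x \<bullet> cw v x') summable_on UNIV"
  by (rule abs_summable_summable[OF abs_summ_inner])

lemma Bf_self: "Bf x x = Sg x"
  by (simp add: Bf_def Sg_def power2_norm_eq_inner)

lemma arv_inner_obs: "arv_inner (obs_a C A x) (obs_a C A x') = Bf x x'"
proof -
  have t: "arv_weight n * (obs_a C A x n \<bullet> obs_a C A x' n) = (\<Sum>v\<in>{v. abel v = n}. cw v x \<bullet> cw v x')" for n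
  proof -
    have "(\<Sum>v\<in>{v. abel v = n}. cw v x \<bullet> cw v x') = (\<Sum>v\<in>{v. abel v = n}. chat x n \<bullet> chat x' n)"
      by (rule sum.cong) (auto simp: cw_abel)
    also have "\<dots> = real (card {v. abel v = n}) * (chat x n \<bullet> chat x' n)" by simp
    finally show ?thesis using card_fiber_weight[of n]
      by (simp add: obs_chat algebra_simps)
  qed
  have "arv_inner (obs_a C A x) (obs_a C A x') = infsum (\<lambda>n. \<Sum>v\<in>{v. abel v = n}. cw v x \<bullet> cw v x') UNIV"
    unfolding arv_inner_def t ..
  also have "\<dots> = Bf x x'" unfolding Bf_def
    using infsum_fibers[OF summ_inner[of x x'], of abel] finite_fiber by blast
  finally show ?thesis .
qed

lemma arv_norm_obs: "arv_norm (obs_a C A x) = sqrt (Sg x)"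
proof -
  have "arv_norm (obs_a C A x) = sqrt (arv_inner (obs_a C A x) (obs_a C A x))"
    by (simp add: arv_norm_def arv_inner_def power2_norm_eq_inner)
  then show ?thesis by (simp add: arv_inner_obs Bf_self)
qed

lemma gram_eq: "gram_a C A = gram C A"
  by (rule ext) (simp add: gram_a_def gram_def arv_inner_obs Bf_def cw_def)

lemma adj_identity:
  "arv_inner (mult_lambda j g) (obs_a C A x) = arv_inner g (obs_a C A (A j x))"
proof -
  define sh where "sh = (\<lambda>m::'d \<Rightarrow> nat. m(j := m j + 1))"
  define F where "F = (\<lambda>n. arv_weight n * (mult_lambda j g n \<bullet> obs_a C A x n))"
  have inj: "inj sh" unfolding inj_def
  proof (intro allI impI ext)
    fix a b k assume h: "sh a = sh b"
    then have "sh a k = sh b k" by simp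
    then show "a k = b k" by (cases "k = j") (auto simp: sh_def)
  qed
  have "arv_inner (mult_lambda j g) (obs_a C A x) = infsum F UNIV" by (simp add: arv_inner_def F_def)
  also have "\<dots> = infsum F (range sh)"
  proof (rule infsum_cong_neutral)
    fix n assume "n \<in> UNIV - range sh"
    have "n j = 0"
    proof (rule ccontr)
      assume "n j \<noteq> 0"
      then have "n = sh (n(j := n j - 1))" by (auto simp: sh_def fun_eq_iff)
      then show False using \<open>n \<in> UNIV - range sh\<close> by blast
    qed
    then show "F n = 0" by (simp add: F_def mult_lambda_def)
  qed auto
  also have "\<dots> = infsum (F \<circ> sh) UNIV" by (rule infsum_reindex[OF inj])
  also have "\<dots> = infsum (\<lambda>m. arv_weight m * (g m \<bullet> obs_a C A (A j x) m)) UNIV"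
  proof (rule infsum_cong)
    fix m
    have g: "mult_lambda j g (sh m) = g m" by (simp add: mult_lambda_def sh_def)
    have ab: "abel (rep m @ [j]) = sh m" by (simp add: abel_snoc sh_def)
    have "arv_weight (sh m) *\<^sub>R obs_a C A x (sh m) = chat x (sh m)" by (rule weight_obs)
    also have "\<dots> = cw (rep m @ [j]) x" using cw_abel[OF ab] by simp
    also have "\<dots> = chat (A j x) m" by (simp add: cw_def chat_def wordop_snoc)
    also have "\<dots> = arv_weight m *\<^sub>R obs_a C A (A j x) m" by (rule weight_obs[symmetric])
    finally have e: "arv_weight (sh m) *\<^sub>R obs_a C A x (sh m) = arv_weight m *\<^sub>R obs_a C A (A j x) m" .
    have "(F \<circ> sh) m = g m \<bullet> (arv_weight (sh m) *\<^sub>R obs_a C A x (sh m))"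
      by (simp add: F_def g)
    also have "\<dots> = arv_weight m * (g m \<bullet> obs_a C A (A j x) m)" by (simp add: e)
    finally show "(F \<circ> sh) m = arv_weight m * (g m \<bullet> obs_a C A (A j x) m)" .
  qed
  finally show ?thesis by (simp add: arv_inner_def)
qed

lemma adj_obs: "mult_lambda_adj j (obs_a C A x) = obs_a C A (A j x)"
  unfolding mult_lambda_adj_def
proof (rule the_equality)
  show "obs_a C A (A j x) \<in> arveson \<and> (\<forall>g\<in>arveson. arv_inner (mult_lambda j g) (obs_a C A x) = arv_inner g (obs_a C A (A j x)))"
    using stab by (simp add: a_output_stable_def adj_identity)
next
  fix h assume "h \<in> arveson \<and> (\<forall>g\<in>arveson. arv_inner (mult_lambda j g) (obs_a C A x) = arv_inner g h)"
  then have "\<forall>g\<in>arveson. arv_inner g h = arv_inner g (obs_a C A (A j x))" by (simp add: adj_identity)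
  then show "h = obs_a C A (A j x)" by (rule arv_determined)
qed

lemma bl_cw: "bounded_linear (cw v)"
proof -
  have "cw v = (\<lambda>x. C (wordop A v x))" by (rule ext) (simp add: cw_def)
  then show ?thesis using bounded_linear_compose[OF blC wordop_bl[OF blA]] by simp
qed

lemma lin_cw: "linear (cw v)" using bl_cw by (rule bounded_linear.linear)
lemma linA: "linear (A j)" using blA by (rule bounded_linear.linear)
lemma linC: "linear C" using blC by (rule bounded_linear.linear)

definition N0 :: "'x set" where "N0 = {x. \<forall>v. cw v x = 0}"

lemma N0_sub: "subspace N0"
  unfolding subspace_def N0_def using linear_0[OF lin_cw] linear_add[OF lin_cw] linear_scale[OF lin_cw] by auto

lemma N0_closed: "closed N0"
  unfolding N0_def by (intro closed_Collect_all closed_Collect_eq linear_continuous_on bl_cw continuous_on_const)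

lemma N0_A: "x \<in> N0 \<Longrightarrow> A j x \<in> N0"
proof -
  assume "x \<in> N0"
  then have "cw (v @ [j]) x = 0" for v by (simp add: N0_def)
  then show "A j x \<in> N0" by (simp add: N0_def cw_def wordop_snoc)
qed

lemma obs_eq_iff: "obs_a C A x = obs_a C A x' \<longleftrightarrow> x - x' \<in> N0"
proof
  assume h: "obs_a C A x = obs_a C A x'"
  have ch: "chat x n = chat x' n" for n
  proof -
    have "chat x n = arv_weight n *\<^sub>R obs_a C A x n" by (simp add: weight_obs)
    also have "\<dots> = arv_weight n *\<^sub>R obs_a C A x' n" by (simp add: h)
    also have "\<dots> = chat x' n" by (simp add: weight_obs)
    finally show ?thesis .
  qed
  have "cw v (x - x') = 0" for v
  proof -
    have "cw v (x - x') = cw v x - cw v x'" by (rule linear_diff[OF lin_cw])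
    also have "\<dots> = chat x (abel v) - chat x' (abel v)" using cw_abel[of v "abel v"] by simp
    finally show ?thesis using ch by simp
  qed
  then show "x - x' \<in> N0" by (simp add: N0_def)
next
  assume "x - x' \<in> N0"
  then have "cw v x = cw v x'" for v using linear_diff[OF lin_cw, of v x x'] by (simp add: N0_def)
  then have "chat x n = chat x' n" for n using cw_abel[of "rep n" n] by (metis abel_rep)
  then show "obs_a C A x = obs_a C A x'" by (simp add: fun_eq_iff obs_chat)
qed

lemma Bf_add: "Bf x (a + b) = Bf x a + Bf x b"
  unfolding Bf_def linear_add[OF lin_cw] inner_add_right by (rule infsum_add[OF summ_inner summ_inner])

lemma Bf_scale: "Bf x (r *\<^sub>R a) = r * Bf x a"
  unfolding Bf_def linear_scale[OF lin_cw] inner_scaleR_right by (rule infsum_cmult_right')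

lemma Bf_bound0: "\<bar>Bf x a\<bar> \<le> ((norm x)\<^sup>2 + (norm a)\<^sup>2) / 2"
proof -
  have "\<bar>Bf x a\<bar> \<le> infsum (\<lambda>v. norm (cw v x \<bullet> cw v a)) UNIV"
    unfolding Bf_def using norm_infsum_bound[OF abs_summ_inner, of x a] by simp
  also have "\<dots> \<le> infsum (\<lambda>v. (1/2) * ((norm (cw v x))\<^sup>2 + (norm (cw v a))\<^sup>2)) UNIV"
  proof (rule infsum_mono[OF abs_summ_inner])
    show "(\<lambda>v. (1/2) * ((norm (cw v x))\<^sup>2 + (norm (cw v a))\<^sup>2)) summable_on UNIV"
      by (intro summable_on_cmult_right summable_on_add summ)
    fix v
    show "norm (cw v x \<bullet> cw v a) \<le> (1/2) * ((norm (cw v x))\<^sup>2 + (norm (cw v a))\<^sup>2)"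
      using Cauchy_Schwarz_ineq2[of "cw v x" "cw v a"] norm_mult_le_sq[of "cw v x" "cw v a"] by simp
  qed
  also have "\<dots> = (1/2) * (Sg x + Sg a)"
    unfolding Sg_def by (subst infsum_cmult_right') (subst infsum_add[OF summ summ], rule refl)
  also have "\<dots> \<le> ((norm x)\<^sup>2 + (norm a)\<^sup>2) / 2" using Sg_le[of x] Sg_le[of a] by simp
  finally show ?thesis .
qed

lemma Bf_bl: "bounded_linear (Bf x)"
proof (rule bounded_linear_intro[where K="((norm x)\<^sup>2 + 1) / 2"])
  show "Bf x (a + b) = Bf x a + Bf x b" for a b by (rule Bf_add)
  show "Bf x (r *\<^sub>R a) = r *\<^sub>R Bf x a" for r a by (simp add: Bf_scale)
  show "norm (Bf x a) \<le> norm a * (((norm x)\<^sup>2 + 1) / 2)" for a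
  proof (cases "a = 0")
    case True
    then have "Bf x a = 0" using Bf_scale[of x 0 a] by simp
    then show ?thesis by simp
  next
    case False
    define u where "u = (1 / norm a) *\<^sub>R a"
    have nu: "norm u = 1" using False by (simp add: u_def)
    have "a = norm a *\<^sub>R u" using False by (simp add: u_def)
    then have "Bf x a = Bf x (norm a *\<^sub>R u)" by (rule arg_cong)
    then have "Bf x a = norm a * Bf x u" by (simp only: Bf_scale)
    have "\<bar>Bf x u\<bar> \<le> ((norm x)\<^sup>2 + 1) / 2" using Bf_bound0[of x u] nu by simp
    have "norm (Bf x a) = norm a * \<bar>Bf x u\<bar>" using \<open>Bf x a = norm a * Bf x u\<close> by (simp add: abs_mult)
    also have "\<dots> \<le> norm a * (((norm x)\<^sup>2 + 1) / 2)" by (rule mult_left_mono) (use \<open>\<bar>Bf x u\<bar> \<le> _\<close> in auto)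
    finally show ?thesis .
  qed
qed

lemma gram_char: "Bf x x' = gram C A x \<bullet> x'"
proof -
  obtain y where y: "\<forall>x'. Bf x x' = y \<bullet> x'" using riesz[OF Bf_bl[of x]] by blast
  have g: "gram C A x = (THE y. \<forall>x'. Bf x x' = y \<bullet> x')" by (simp add: gram_def Bf_def cw_def)
  have "gram C A x = y" unfolding g
  proof (rule the_equality)
    show "\<forall>x'. Bf x x' = y \<bullet> x'" by (rule y)
    fix y' assume "\<forall>x'. Bf x x' = y' \<bullet> x'"
    then have "y' \<bullet> (y' - y) = y \<bullet> (y' - y)" using y by metis
    then have "(y' - y) \<bullet> (y' - y) = 0" by (simp add: inner_diff_left)
    then show "y' = y" by simp
  qed
  then show ?thesis using y by simp
qed

lemma ker_gram: "{x. gram C A x = 0} = N0"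
proof (intro set_eqI iffI)
  fix x assume "x \<in> {x. gram C A x = 0}"
  then have "Bf x x = 0" using gram_char[of x x] by simp
  then have S0: "Sg x = 0" by (simp add: Bf_self)
  have "cw v x = 0" for v
  proof -
    have "sum (\<lambda>v. (norm (cw v x))\<^sup>2) {v} \<le> Sg x"
      unfolding Sg_def by (rule finite_sum_le_infsum[OF summ]) auto
    then show ?thesis using S0 by simp
  qed
  then show "x \<in> N0" by (simp add: N0_def)
next
  fix x assume "x \<in> N0"
  then have "Bf x x' = 0" for x' by (simp add: Bf_def N0_def)
  then have "gram C A x \<bullet> gram C A x = 0" using gram_char[of x "gram C A x"] by simp
  then show "x \<in> {x. gram C A x = 0}" by simp
qed

lemma Q_def': "Q_a C A = orth_proj (orthogonal_comp N0)"
  by (simp add: Q_a_def gram_eq ker_gram)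

lemma Q_props: "Q_a C A x \<in> orthogonal_comp N0 \<and> x - Q_a C A x \<in> N0"
proof -
  obtain p where p: "p \<in> N0" "x - p \<in> orthogonal_comp N0" using proj_exists[OF N0_sub N0_closed] by blast
  have sub1: "subspace (orthogonal_comp N0)" by (rule subspace_orthogonal_comp)
  have sub2: "subspace (orthogonal_comp (orthogonal_comp N0))" by (rule subspace_orthogonal_comp)
  have "orth_proj (orthogonal_comp N0) x = x - p" unfolding orth_proj_def
  proof (rule the_equality)
    show "x - p \<in> orthogonal_comp N0 \<and> x - (x - p) \<in> orthogonal_comp (orthogonal_comp N0)"
      using p orthogonal_comp_subset by auto
    fix y assume y: "y \<in> orthogonal_comp N0 \<and> x - y \<in> orthogonal_comp (orthogonal_comp N0)"
    have "y - (x - p) \<in> orthogonal_comp N0" using y p(2) sub1 by (simp add: subspace_diff)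
    moreover have "p - (x - y) \<in> orthogonal_comp (orthogonal_comp N0)"
      using y p(1) orthogonal_comp_subset sub2 by (blast intro: subspace_diff)
    moreover have "p - (x - y) = y - (x - p)" by simp
    ultimately have "y - (x - p) = 0" using zero_if_both[of "y - (x - p)" "orthogonal_comp N0"] by simp
    then show "y = x - p" by simp
  qed
  then show ?thesis using p by (simp add: Q_def')
qed

lemma Q_fix: "y \<in> orthogonal_comp N0 \<Longrightarrow> Q_a C A y = y"
proof -
  assume y: "y \<in> orthogonal_comp N0"
  have "Q_a C A y - y \<in> orthogonal_comp N0" using Q_props[of y] y subspace_orthogonal_comp by (blast intro: subspace_diff)
  moreover have "Q_a C A y - y \<in> N0" using Q_props[of y] N0_sub subspace_neg[of N0 "y - Q_a C A y"] by simp
  ultimately have "Q_a C A y - y = 0" using zero_if_both[of "Q_a C A y - y" N0] by simp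
  then show ?thesis by simp
qed

lemma Q_cong: "x - x' \<in> N0 \<Longrightarrow> Q_a C A x = Q_a C A x'"
proof -
  assume h: "x - x' \<in> N0"
  have "Q_a C A x - Q_a C A x' \<in> orthogonal_comp N0"
    using Q_props[of x] Q_props[of x'] subspace_orthogonal_comp by (blast intro: subspace_diff)
  moreover have "(x - x') - (x - Q_a C A x) + (x' - Q_a C A x') \<in> N0"
    using Q_props[of x] Q_props[of x'] h N0_sub by (blast intro: subspace_diff subspace_add)
  moreover have "(x - x') - (x - Q_a C A x) + (x' - Q_a C A x') = Q_a C A x - Q_a C A x'" by simp
  ultimately have "Q_a C A x - Q_a C A x' = 0" using zero_if_both[of "Q_a C A x - Q_a C A x'" N0] by simp
  then show ?thesis by simp
qed

lemma Q_pyth: "(norm z)\<^sup>2 = (norm (Q_a C A z))\<^sup>2 + (norm (z - Q_a C A z))\<^sup>2"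
proof -
  have "orthogonal (z - Q_a C A z) (Q_a C A z)"
    using Q_props[of z] by (auto simp: orthogonal_comp_def)
  then have "orthogonal (Q_a C A z) (z - Q_a C A z)" by (simp add: orthogonal_commute)
  from norm_add_Pythagorean[OF this] show ?thesis by simp
qed

lemma Q_le: "norm (Q_a C A z) \<le> norm z"
proof -
  have "(norm (Q_a C A z))\<^sup>2 \<le> (norm z)\<^sup>2" using Q_pyth[of z] by simp
  then show ?thesis by (rule power2_le_imp_le) simp
qed

lemma lifted_obs: "lifted_norm C A (obs_a C A x) = norm (Q_a C A x)"
proof -
  define x0 where "x0 = (SOME x'. obs_a C A x' = obs_a C A x)"
  have "obs_a C A x0 = obs_a C A x" unfolding x0_def by (rule someI[of _ x]) simp
  then have "Q_a C A x0 = Q_a C A x" by (simp add: obs_eq_iff Q_cong)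
  then show ?thesis by (simp add: lifted_norm_def x0_def)
qed

lemma part3_lhs: "(\<Sum>j\<in>UNIV. (lifted_norm C A (mult_lambda_adj j (obs_a C A x)))\<^sup>2)
   = (\<Sum>j\<in>UNIV. (norm (Q_a C A (A j (Q_a C A x))))\<^sup>2)"
proof (rule sum.cong)
  fix j
  have "A j x - A j (Q_a C A x) = A j (x - Q_a C A x)" by (rule linear_diff[OF linA, symmetric])
  also have "\<dots> \<in> N0" using Q_props[of x] N0_A by blast
  finally have "Q_a C A (A j x) = Q_a C A (A j (Q_a C A x))" by (rule Q_cong)
  then show "(lifted_norm C A (mult_lambda_adj j (obs_a C A x)))\<^sup>2 = (norm (Q_a C A (A j (Q_a C A x))))\<^sup>2"
    by (simp add: adj_obs lifted_obs)
qed simp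

lemma C_Q: "C x = C (Q_a C A x)"
proof -
  have "cw [] (x - Q_a C A x) = 0" using Q_props[of x] by (simp add: N0_def)
  then have "C (x - Q_a C A x) = 0" by (simp add: cw_def)
  then show ?thesis by (simp add: linear_diff[OF linC])
qed

lemma part3_rhs: "(lifted_norm C A (obs_a C A x))\<^sup>2 - (norm (arv_eval0 (obs_a C A x)))\<^sup>2
   = (norm (Q_a C A x))\<^sup>2 - (norm (C (Q_a C A x)))\<^sup>2"
  by (simp add: lifted_obs eval0 C_Q[of x, symmetric])

lemma contr_at: "(norm (C y))\<^sup>2 + (\<Sum>j\<in>UNIV. (norm (A j y))\<^sup>2) \<le> (norm y)\<^sup>2"
  using contr by (simp add: contractive_pair_def)

lemma part3_ineq: "\<forall>f\<in>range (obs_a C A).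
           (\<Sum>j\<in>UNIV. (lifted_norm C A (mult_lambda_adj j f))\<^sup>2)
             \<le> (lifted_norm C A f)\<^sup>2 - (norm (arv_eval0 f))\<^sup>2"
proof
  fix f assume "f \<in> range (obs_a C A)"
  then obtain x where f: "f = obs_a C A x" by blast
  define y where "y = Q_a C A x"
  have "(\<Sum>j\<in>UNIV. (norm (Q_a C A (A j y)))\<^sup>2) \<le> (\<Sum>j\<in>UNIV. (norm (A j y))\<^sup>2)"
    by (intro sum_mono power_mono Q_le) simp
  then show "(\<Sum>j\<in>UNIV. (lifted_norm C A (mult_lambda_adj j f))\<^sup>2)
             \<le> (lifted_norm C A f)\<^sup>2 - (norm (arv_eval0 f))\<^sup>2"
    unfolding f part3_lhs part3_rhs using contr_at[of y] by (simp add: y_def)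
qed

lemma part3_eq: "(\<forall>f\<in>range (obs_a C A).
           (\<Sum>j\<in>UNIV. (lifted_norm C A (mult_lambda_adj j f))\<^sup>2)
             = (lifted_norm C A f)\<^sup>2 - (norm (arv_eval0 f))\<^sup>2)
       \<longleftrightarrow> ((\<forall>j. A j ` orthogonal_comp {x. gram C A x = 0} \<subseteq> orthogonal_comp {x. gram C A x = 0})
            \<and> isometric_pair_on (orthogonal_comp {x. gram C A x = 0}) C A)"
proof -
  have E: "(\<forall>f\<in>range (obs_a C A).
           (\<Sum>j\<in>UNIV. (lifted_norm C A (mult_lambda_adj j f))\<^sup>2)
             = (lifted_norm C A f)\<^sup>2 - (norm (arv_eval0 f))\<^sup>2)
     \<longleftrightarrow> (\<forall>y\<in>orthogonal_comp N0. (\<Sum>j\<in>UNIV. (norm (Q_a C A (A j y)))\<^sup>2) = (norm y)\<^sup>2 - (norm (C y))\<^sup>2)"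
  proof
    assume H: "\<forall>f\<in>range (obs_a C A).
           (\<Sum>j\<in>UNIV. (lifted_norm C A (mult_lambda_adj j f))\<^sup>2)
             = (lifted_norm C A f)\<^sup>2 - (norm (arv_eval0 f))\<^sup>2"
    show "\<forall>y\<in>orthogonal_comp N0. (\<Sum>j\<in>UNIV. (norm (Q_a C A (A j y)))\<^sup>2) = (norm y)\<^sup>2 - (norm (C y))\<^sup>2"
    proof
      fix y assume y: "y \<in> orthogonal_comp N0"
      have "(\<Sum>j\<in>UNIV. (lifted_norm C A (mult_lambda_adj j (obs_a C A y)))\<^sup>2)
             = (lifted_norm C A (obs_a C A y))\<^sup>2 - (norm (arv_eval0 (obs_a C A y)))\<^sup>2"
        using H by blast
      then show "(\<Sum>j\<in>UNIV. (norm (Q_a C A (A j y)))\<^sup>2) = (norm y)\<^sup>2 - (norm (C y))\<^sup>2"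
        unfolding part3_lhs part3_rhs Q_fix[OF y] .
    qed
  next
    assume H: "\<forall>y\<in>orthogonal_comp N0. (\<Sum>j\<in>UNIV. (norm (Q_a C A (A j y)))\<^sup>2) = (norm y)\<^sup>2 - (norm (C y))\<^sup>2"
    show "\<forall>f\<in>range (obs_a C A).
           (\<Sum>j\<in>UNIV. (lifted_norm C A (mult_lambda_adj j f))\<^sup>2)
             = (lifted_norm C A f)\<^sup>2 - (norm (arv_eval0 f))\<^sup>2"
    proof
      fix f assume "f \<in> range (obs_a C A)"
      then obtain x where f: "f = obs_a C A x" by blast
      show "(\<Sum>j\<in>UNIV. (lifted_norm C A (mult_lambda_adj j f))\<^sup>2)
             = (lifted_norm C A f)\<^sup>2 - (norm (arv_eval0 f))\<^sup>2"
        unfolding f part3_lhs part3_rhs using H Q_props[of x] by blast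
    qed
  qed
  have I: "isometric_pair_on (orthogonal_comp N0) C A \<longleftrightarrow>
     (\<forall>y\<in>orthogonal_comp N0. (\<Sum>j\<in>UNIV. (norm (Q_a C A (A j y)))\<^sup>2) = (norm y)\<^sup>2 - (norm (C y))\<^sup>2)"
    unfolding isometric_pair_on_def Q_def'[symmetric]
  proof (rule ball_cong[OF refl])
    fix y
    show "((norm (C y))\<^sup>2 + (\<Sum>j\<in>UNIV. (norm (Q_a C A (A j y)))\<^sup>2) = (norm y)\<^sup>2) =
      ((\<Sum>j\<in>UNIV. (norm (Q_a C A (A j y)))\<^sup>2) = (norm y)\<^sup>2 - (norm (C y))\<^sup>2)" by linarith
  qed
  have inv: "A j y \<in> orthogonal_comp N0"
    if H: "\<forall>y\<in>orthogonal_comp N0. (\<Sum>j\<in>UNIV. (norm (Q_a C A (A j y)))\<^sup>2) = (norm y)\<^sup>2 - (norm (C y))\<^sup>2"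
      and y: "y \<in> orthogonal_comp N0" for j y
  proof -
    have "(\<Sum>j\<in>UNIV. (norm (A j y))\<^sup>2 - (norm (Q_a C A (A j y)))\<^sup>2) = 
       (\<Sum>j\<in>UNIV. (norm (A j y))\<^sup>2) - (\<Sum>j\<in>UNIV. (norm (Q_a C A (A j y)))\<^sup>2)"
      by (simp add: sum_subtractf)
    also have "\<dots> \<le> 0" using H y contr_at[of y] by simp
    finally have le: "(\<Sum>j\<in>UNIV. (norm (A j y))\<^sup>2 - (norm (Q_a C A (A j y)))\<^sup>2) \<le> 0" .
    have nn: "\<And>i. 0 \<le> (norm (A i y))\<^sup>2 - (norm (Q_a C A (A i y)))\<^sup>2"
      using Q_le by (simp add: power_mono)
    have "(\<Sum>j\<in>UNIV. (norm (A j y))\<^sup>2 - (norm (Q_a C A (A j y)))\<^sup>2) \<ge> 0"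
      using nn by (simp add: sum_nonneg)
    then have "(\<Sum>j\<in>UNIV. (norm (A j y))\<^sup>2 - (norm (Q_a C A (A j y)))\<^sup>2) = 0" using le by linarith
    then have "\<forall>i\<in>UNIV. (norm (A i y))\<^sup>2 - (norm (Q_a C A (A i y)))\<^sup>2 = 0"
      using sum_nonneg_eq_0_iff[of UNIV "\<lambda>i. (norm (A i y))\<^sup>2 - (norm (Q_a C A (A i y)))\<^sup>2"] nn by simp
    then have "(norm (A j y))\<^sup>2 - (norm (Q_a C A (A j y)))\<^sup>2 = 0" by simp
    then have "(norm (A j y - Q_a C A (A j y)))\<^sup>2 = 0" using Q_pyth[of "A j y"] by simp
    then have "A j y = Q_a C A (A j y)" by simp
    then show ?thesis using Q_props[of "A j y"] by simp
  qed
  show ?thesis unfolding ker_gram E I[symmetric]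
    using inv I by blast
qed

end

lemma (in thm_setting) sqrt_iff: "sqrt (Sg x) = norm x \<longleftrightarrow> Sg x = (norm x)\<^sup>2"
proof
  assume "sqrt (Sg x) = norm x"
  then have "(sqrt (Sg x))\<^sup>2 = (norm x)\<^sup>2" by simp
  then show "Sg x = (norm x)\<^sup>2" using Sg_nonneg[of x] by simp
next
  assume "Sg x = (norm x)\<^sup>2"
  then show "sqrt (Sg x) = norm x" by simp
qed

lemma (in thm_setting) sqrt_le: "sqrt (Sg x) \<le> norm x"
proof -
  have "sqrt (Sg x) \<le> sqrt ((norm x)\<^sup>2)" using Sg_le[of x] by (rule real_sqrt_le_mono)
  then show ?thesis by simp
qed

theorem theorem3p15:
  fixes C :: "'x::{real_inner,complete_space} \<Rightarrow> 'y::{real_inner,complete_space}"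
    and A :: "'d::finite \<Rightarrow> 'x \<Rightarrow> 'x"
  assumes "bounded_linear C"
    and "\<And>j. bounded_linear (A j)"
    and "contractive_pair C A"
    and "a_output_stable C A"
    and "C_abelian C A"
  shows "((\<forall>j x. mult_lambda_adj j (obs_a C A x) = obs_a C A (A j x))
       \<and> (\<forall>j. mult_lambda_adj j ` range (obs_a C A) \<subseteq> range (obs_a C A)))
     \<and> (\<forall>x. arv_norm (obs_a C A x) \<le> norm x)
     \<and> ((\<forall>x. arv_norm (obs_a C A x) = norm x) \<longleftrightarrow> isometric_pair C A \<and> strongly_stable A)
     \<and> (\<forall>f\<in>range (obs_a C A).
           (\<Sum>j\<in>UNIV. (lifted_norm C A (mult_lambda_adj j f))\<^sup>2)
             \<le> (lifted_norm C A f)\<^sup>2 - (norm (arv_eval0 f))\<^sup>2)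
     \<and> ((\<forall>f\<in>range (obs_a C A).
           (\<Sum>j\<in>UNIV. (lifted_norm C A (mult_lambda_adj j f))\<^sup>2)
             = (lifted_norm C A f)\<^sup>2 - (norm (arv_eval0 f))\<^sup>2)
       \<longleftrightarrow> ((\<forall>j. A j ` orthogonal_comp {x. gram C A x = 0} \<subseteq> orthogonal_comp {x. gram C A x = 0})
            \<and> isometric_pair_on (orthogonal_comp {x. gram C A x = 0}) C A))"
proof -
  interpret thm_setting C A by (rule thm_setting.intro) (use assms in auto)
  have p1: "\<forall>j x. mult_lambda_adj j (obs_a C A x) = obs_a C A (A j x)" by (simp add: adj_obs)
  have p2: "\<forall>j. mult_lambda_adj j ` range (obs_a C A) \<subseteq> range (obs_a C A)" by (auto simp: adj_obs)
  have p3: "\<forall>x. arv_norm (obs_a C A x) \<le> norm x" by (simp add: arv_norm_obs sqrt_le)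
  have p4: "(\<forall>x. arv_norm (obs_a C A x) = norm x) \<longleftrightarrow> isometric_pair C A \<and> strongly_stable A"
    unfolding arv_norm_obs sqrt_iff by (rule iso_iff)
  show ?thesis using p1 p2 p3 p4 part3_ineq part3_eq by blast
qed

end
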